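(* Let $G,H$ be graphs, let $a,b$ be vertices of $G$, and let $\alpha,\beta,\gamma,\kappa$ be vertices of $H$. There is perfect state transfer between the pair state of $\{(a,\alpha),(a,\beta)\}$ and the pair state of $\{(b,\gamma),(b,\kappa)\}$ in the Cartesian product $G\square H$ at time $t$ if and only if both: (i) there is perfect Laplacian vertex state transfer between $a$ and $b$ in $G$ at time $t$; and (ii) there is perfect pair state transfer between $e_\alpha-e_\beta$ and $e_\gamma-e_\kappa$ in $H$ at time $t$.
   Context: All graphs are finite and simple. The Cartesian product $G\square H$ has vertex set $V(G)\times V(H)$, with $(g_1,h_1)\sim(g_2,h_2)$ iff either $g_1=g_2$ and $h_1\sim h_2$ in $H$, or $g_1\sim g_2$ in $G$ and $h_1=h_2$. For a graph $X$ with Laplacian $L=\Delta-A$, set $U_X(t)=\exp(itL)$. Perfect pair state transfer between $e_x-e_y$ and $e_z-e_w$ at time $t$ means $U_X(t)(e_x-e_y)=\gamma(e_z-e_w)$ for some $\gamma\in\mathbb{C}$, $|\gamma|=1$; the pair state of a pair $\{x,y\}$ is $e_x-e_y$. Perfect Laplacian vertex state transfer between vertices $a,b$ at time $t$ means $U_X(t)e_a=\gamma e_b$ for some $|\gamma|=1$. *)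

theory Defs
  imports "HOL-Analysis.Analysis"
begin

definition simple_graph :: "('v::finite \<Rightarrow> 'v \<Rightarrow> bool) \<Rightarrow> bool" where
  "simple_graph E \<longleftrightarrow> (\<forall>x y. E x y \<longrightarrow> E y x) \<and> (\<forall>x. \<not> E x x)"

definition cart_prod :: "('a \<Rightarrow> 'a \<Rightarrow> bool) \<Rightarrow> ('b \<Rightarrow> 'b \<Rightarrow> bool) \<Rightarrow> ('a \<times> 'b) \<Rightarrow> ('a \<times> 'b) \<Rightarrow> bool" where
  "cart_prod E F p q \<longleftrightarrow> (fst p = fst q \<and> F (snd p) (snd q)) \<or> (E (fst p) (fst q) \<and> snd p = snd q)"

type_synonym 'v mat = "'v \<Rightarrow> 'v \<Rightarrow> complex"

definition mat_mult :: "'v::finite mat \<Rightarrow> 'v mat \<Rightarrow> 'v mat" where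
  "mat_mult A B = (\<lambda>x y. \<Sum>z\<in>UNIV. A x z * B z y)"

definition mat_id :: "'v mat" where
  "mat_id = (\<lambda>x y. if x = y then 1 else 0)"

primrec mat_pow :: "'v::finite mat \<Rightarrow> nat \<Rightarrow> 'v mat" where
  "mat_pow A 0 = mat_id"
| "mat_pow A (Suc n) = mat_mult (mat_pow A n) A"

definition mat_exp :: "'v::finite mat \<Rightarrow> 'v mat" where
  "mat_exp A = (\<lambda>x y. \<Sum>n. mat_pow A n x y / of_nat (fact n))"

definition mat_vec :: "'v::finite mat \<Rightarrow> ('v \<Rightarrow> complex) \<Rightarrow> ('v \<Rightarrow> complex)" where
  "mat_vec A v = (\<lambda>x. \<Sum>y\<in>UNIV. A x y * v y)"

definition laplacian :: "('v::finite \<Rightarrow> 'v \<Rightarrow> bool) \<Rightarrow> 'v mat" where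
  "laplacian E = (\<lambda>x y. (if x = y then of_nat (card {z. E x z}) else 0) - (if E x y then 1 else 0))"

definition U :: "('v::finite \<Rightarrow> 'v \<Rightarrow> bool) \<Rightarrow> real \<Rightarrow> 'v mat" where
  "U E t = mat_exp (\<lambda>x y. \<i> * complex_of_real t * laplacian E x y)"

definition e_vec :: "'v \<Rightarrow> 'v \<Rightarrow> complex" where
  "e_vec a = (\<lambda>x. if x = a then 1 else 0)"

definition pair_state :: "'v \<Rightarrow> 'v \<Rightarrow> 'v \<Rightarrow> complex" where
  "pair_state x y = (\<lambda>z. e_vec x z - e_vec y z)"

definition pair_PST :: "('v::finite \<Rightarrow> 'v \<Rightarrow> bool) \<Rightarrow> real \<Rightarrow> 'v \<Rightarrow> 'v \<Rightarrow> 'v \<Rightarrow> 'v \<Rightarrow> bool" where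
  "pair_PST E t x y z w \<longleftrightarrow>
     (\<exists>g::complex. cmod g = 1 \<and> mat_vec (U E t) (pair_state x y) = (\<lambda>v. g * pair_state z w v))"

definition vertex_PST :: "('v::finite \<Rightarrow> 'v \<Rightarrow> bool) \<Rightarrow> real \<Rightarrow> 'v \<Rightarrow> 'v \<Rightarrow> bool" where
  "vertex_PST E t a b \<longleftrightarrow>
     (\<exists>g::complex. cmod g = 1 \<and> mat_vec (U E t) (e_vec a) = (\<lambda>v. g * e_vec b v))"

end

theory Submission
  imports Defs
begin


typedef ('v::finite) cm = "UNIV :: ('v \<Rightarrow> 'v \<Rightarrow> complex) set" morphisms ent Mat by auto

lemma ent_Mat[simp]: "ent (Mat f) = f" by (simp add: Mat_inverse)
lemma Mat_ent[simp]: "Mat (ent A) = A" by (rule ent_inverse)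
lemma cm_eqI: "(\<And>i j. ent A i j = ent B i j) \<Longrightarrow> A = B"
  by (metis ent_inverse ext)

lemma mat_mult_assoc: "mat_mult (mat_mult A B) C = mat_mult A (mat_mult B C)"
  unfolding mat_mult_def
  by (auto simp: sum_distrib_left sum_distrib_right mult.assoc intro!: ext sum.swap)

lemma mat_id_mult[simp]: "mat_mult mat_id A = A"
proof (intro ext)
  fix x y
  have "(\<Sum>z\<in>UNIV. (if x = z then 1 else 0) * A z y) = (\<Sum>z\<in>UNIV. if x = z then A x y else 0)"
    by (intro sum.cong) auto
  then show "mat_mult mat_id A x y = A x y" by (simp add: mat_mult_def mat_id_def)
qed
lemma mult_mat_id[simp]: "mat_mult A mat_id = A"
  by (simp add: mat_mult_def mat_id_def if_distrib cong: if_cong)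

instantiation cm :: (finite) ring_1
begin
definition "0 = Mat (\<lambda>i j. 0)"
definition "1 = Mat mat_id"
definition "A + B = Mat (\<lambda>i j. ent A i j + ent B i j)"
definition "A - B = Mat (\<lambda>i j. ent A i j - ent B i j)"
definition "- A = Mat (\<lambda>i j. - ent A i j)"
definition "A * B = Mat (mat_mult (ent A) (ent B))"
instance
proof
  fix a b c :: "'a cm"
  show "a * b * c = a * (b * c)" by (simp add: times_cm_def mat_mult_assoc)
  show "(a + b) * c = a * c + b * c"
    by (rule cm_eqI) (simp add: times_cm_def plus_cm_def mat_mult_def distrib_right sum.distrib)
  show "a * (b + c) = a * b + a * c"
    by (rule cm_eqI) (simp add: times_cm_def plus_cm_def mat_mult_def distrib_left sum.distrib)
  show "1 * a = a" by (simp add: times_cm_def one_cm_def)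
  show "a * 1 = a" by (simp add: times_cm_def one_cm_def)
  show "a + b + c = a + (b + c)" by (rule cm_eqI) (simp add: plus_cm_def add.assoc)
  show "a + b = b + a" by (rule cm_eqI) (simp add: plus_cm_def add.commute)
  show "0 + a = a" by (rule cm_eqI) (simp add: plus_cm_def zero_cm_def)
  show "- a + a = 0" by (rule cm_eqI) (simp add: plus_cm_def zero_cm_def uminus_cm_def)
  show "a - b = a + - b" by (rule cm_eqI) (simp add: plus_cm_def minus_cm_def uminus_cm_def)
  show "(0::'a cm) \<noteq> 1"
  proof
    assume "(0::'a cm) = 1"
    then have "ent (0::'a cm) undefined undefined = ent (1::'a cm) undefined undefined" by simp
    then show False by (simp add: zero_cm_def one_cm_def mat_id_def)
  qed
qed
end

lemma ent_simps[simp]: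
  "ent (A + B) i j = ent A i j + ent B i j"
  "ent (A - B) i j = ent A i j - ent B i j"
  "ent (- A) i j = - ent A i j"
  "ent 0 i j = 0"
  "ent 1 = mat_id"
  "ent (A * B) = mat_mult (ent A) (ent B)"
  by (simp_all add: plus_cm_def minus_cm_def uminus_cm_def zero_cm_def one_cm_def times_cm_def)

instantiation cm :: (finite) real_vector
begin
definition "scaleR r A = Mat (\<lambda>i j. r *\<^sub>R ent A i j)"
instance
  by standard (auto intro!: cm_eqI simp: scaleR_cm_def scaleR_add_right scaleR_add_left)
end

lemma ent_scaleR[simp]: "ent (r *\<^sub>R A) i j = r *\<^sub>R ent A i j"
  by (simp add: scaleR_cm_def)

definition rowsum :: "'v::finite cm \<Rightarrow> 'v \<Rightarrow> real" where
  "rowsum A i = (\<Sum>j\<in>UNIV. cmod (ent A i j))"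

instantiation cm :: (finite) real_normed_vector
begin
definition "norm (A::'a cm) = Max (range (rowsum A))"
definition "sgn (A::'a cm) = A /\<^sub>R norm A"
definition "dist (A::'a cm) B = norm (A - B)"
definition "(uniformity :: ('a cm \<times> 'a cm) filter) = (INF e\<in>{0 <..}. principal {(x, y). dist x y < e})"
definition "open (S :: 'a cm set) \<longleftrightarrow> (\<forall>x\<in>S. eventually (\<lambda>(x', y). x' = x \<longrightarrow> y \<in> S) uniformity)"

lemma rowsum_le_norm: "rowsum A i \<le> norm A"
  unfolding norm_cm_def by (rule Max_ge) auto

lemma norm_le_cm: "(\<And>i. rowsum A i \<le> c) \<Longrightarrow> norm A \<le> c"
  unfolding norm_cm_def by (subst Max_le_iff) auto

lemma ent_le_norm: "cmod (ent A i j) \<le> norm A"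
proof -
  have "cmod (ent A i j) \<le> rowsum A i" unfolding rowsum_def
    by (rule member_le_sum) auto
  then show ?thesis using rowsum_le_norm[of A i] by linarith
qed

instance
proof
  fix r :: real and x y :: "'a cm"
  show "(norm x = 0) = (x = 0)"
  proof
    assume "norm x = 0"
    then have "\<And>i j. cmod (ent x i j) \<le> 0" using ent_le_norm by metis
    then show "x = 0" by (intro cm_eqI) simp
  next
    assume "x = 0"
    then show "norm x = 0" unfolding norm_cm_def rowsum_def by simp
  qed
  show "norm (x + y) \<le> norm x + norm y"
  proof (rule norm_le_cm)
    fix i
    have "rowsum (x + y) i \<le> rowsum x i + rowsum y i"
      unfolding rowsum_def sum.distrib[symmetric] by (intro sum_mono) (simp add: norm_triangle_ineq)
    then show "rowsum (x + y) i \<le> norm x + norm y"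
      using rowsum_le_norm[of x i] rowsum_le_norm[of y i] by linarith
  qed
  show "norm (r *\<^sub>R x) = \<bar>r\<bar> * norm x"
  proof -
    have rs: "rowsum (r *\<^sub>R x) i = \<bar>r\<bar> * rowsum x i" for i
      by (simp add: rowsum_def sum_distrib_left)
    have "range (rowsum (r *\<^sub>R x)) = (\<lambda>s. \<bar>r\<bar> * s) ` range (rowsum x)"
      by (auto simp: rs image_image)
    then have "norm (r *\<^sub>R x) = Max ((\<lambda>s. \<bar>r\<bar> * s) ` range (rowsum x))"
      by (simp add: norm_cm_def)
    also have "\<dots> = \<bar>r\<bar> * Max (range (rowsum x))"
      by (rule mono_Max_commute[symmetric]) (auto simp: mono_def mult_left_mono)
    finally show ?thesis by (simp add: norm_cm_def)
  qed
qed (rule sgn_cm_def dist_cm_def open_cm_def uniformity_cm_def)+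
end

lemma norm_mat_id: "norm (1::'v::finite cm) = 1"
proof -
  have "rowsum (1::'v cm) i = 1" for i
    by (simp add: rowsum_def mat_id_def if_distrib cong: if_cong)
  then show ?thesis by (simp add: norm_cm_def)
qed

instance cm :: (finite) real_normed_algebra_1
proof
  fix a b :: "'a cm" and r :: real
  show "r *\<^sub>R a * b = r *\<^sub>R (a * b)"
    by (rule cm_eqI) (simp add: mat_mult_def scaleR_sum_right)
  show "a * r *\<^sub>R b = r *\<^sub>R (a * b)"
    by (rule cm_eqI) (simp add: mat_mult_def scaleR_sum_right)
  show "norm (1::'a cm) = 1" by (rule norm_mat_id)
  show "norm (a * b) \<le> norm a * norm b"
  proof (rule norm_le_cm)
    fix i
    have "rowsum (a * b) i \<le> (\<Sum>j\<in>UNIV. \<Sum>z\<in>UNIV. cmod (ent a i z) * cmod (ent b z j))"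
      unfolding rowsum_def ent_simps mat_mult_def
      by (intro sum_mono order.trans[OF norm_sum]) (simp add: norm_mult)
    also have "\<dots> = (\<Sum>z\<in>UNIV. cmod (ent a i z) * rowsum b z)"
      by (subst sum.swap) (simp add: rowsum_def sum_distrib_left)
    also have "\<dots> \<le> (\<Sum>z\<in>UNIV. cmod (ent a i z) * norm b)"
      by (intro sum_mono mult_left_mono rowsum_le_norm) auto
    also have "\<dots> = rowsum a i * norm b" by (simp add: rowsum_def sum_distrib_right)
    also have "\<dots> \<le> norm a * norm b"
      by (intro mult_right_mono rowsum_le_norm) auto
    finally show "rowsum (a * b) i \<le> norm a * norm b" .
  qed
qed


lemma bl_ent: "bounded_linear (\<lambda>A::'v::finite cm. ent A i j)"
  by (rule bounded_linear_intro[where K=1]) (auto simp: ent_le_norm)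

lemma norm_le_sum_cm: "norm (A::'v::finite cm) \<le> (\<Sum>i\<in>UNIV. \<Sum>j\<in>UNIV. cmod (ent A i j))"
proof (rule norm_le_cm)
  fix i
  show "rowsum A i \<le> (\<Sum>i\<in>UNIV. \<Sum>j\<in>UNIV. cmod (ent A i j))"
    unfolding rowsum_def by (rule member_le_sum[of i UNIV "\<lambda>i. \<Sum>j\<in>UNIV. cmod (ent A i j)"]) (auto intro: sum_nonneg)
qed

instance cm :: (finite) banach
proof
  fix X :: "nat \<Rightarrow> 'a cm"
  assume X: "Cauchy X"
  have "\<forall>i j. \<exists>l. (\<lambda>n. ent (X n) i j) \<longlonglongrightarrow> l"
  proof (intro allI)
    fix i j
    have "Cauchy (\<lambda>n. ent (X n) i j)" using bounded_linear.Cauchy[OF bl_ent X] .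
    then show "\<exists>l. (\<lambda>n. ent (X n) i j) \<longlonglongrightarrow> l" using Cauchy_convergent convergent_def by blast
  qed
  then obtain L where L: "\<And>i j. (\<lambda>n. ent (X n) i j) \<longlonglongrightarrow> L i j" by metis
  have "(\<lambda>n. X n - Mat L) \<longlonglongrightarrow> 0"
  proof (rule Lim_null_comparison)
    show "\<forall>\<^sub>F n in sequentially. norm (X n - Mat L) \<le> (\<Sum>i\<in>UNIV. \<Sum>j\<in>UNIV. cmod (ent (X n) i j - L i j))"
      using norm_le_sum_cm[of "X _ - Mat L"] by simp
    show "(\<lambda>n. \<Sum>i\<in>UNIV. \<Sum>j\<in>UNIV. cmod (ent (X n) i j - L i j)) \<longlonglongrightarrow> 0"
      by (intro tendsto_null_sum tendsto_norm_zero) (use L LIM_zero in blast)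
  qed
  then have "X \<longlonglongrightarrow> Mat L" by (simp add: LIM_zero_iff)
  then show "convergent X" by (auto simp: convergent_def)
qed




lemma ent_power: "ent ((Mat M) ^ n) = mat_pow M n"
proof (induction n)
  case (Suc n)
  have "ent ((Mat M) ^ Suc n) = ent ((Mat M) ^ n * Mat M)" by (simp only: power_Suc2)
  then show ?case using Suc by simp
qed simp

lemma mat_pow_Suc': "mat_pow M (Suc n) = mat_mult M (mat_pow M n)"
  by (metis ent_power power_Suc ent_simps(6) ent_Mat)

lemma exp_sums_ent: "(\<lambda>n. mat_pow M n x y / of_nat (fact n)) sums (ent (exp (Mat M)) x y)"
proof -
  have "(\<lambda>n. ent ((Mat M) ^ n /\<^sub>R fact n) x y) sums (ent (exp (Mat M)) x y)"
    by (rule bounded_linear.sums[OF bl_ent exp_converges])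
  then show ?thesis by (simp only: ent_scaleR ent_power) (simp add: scaleR_conv_of_real divide_inverse mult.commute)
qed

lemma mat_exp_ent: "mat_exp M = ent (exp (Mat M))"
  unfolding mat_exp_def by (intro ext) (rule sums_unique[OF exp_sums_ent, symmetric])

lemma mat_exp_sums: "(\<lambda>n. mat_pow M n x y / of_nat (fact n)) sums (mat_exp M x y)"
  using exp_sums_ent mat_exp_ent by metis

lemma mat_exp_add:
  assumes "mat_mult M N = mat_mult N M"
  shows "mat_exp (\<lambda>x y. M x y + N x y) = mat_mult (mat_exp M) (mat_exp N)"
proof -
  have e: "Mat (\<lambda>x y. M x y + N x y) = Mat M + Mat N" by (rule cm_eqI) simp
  have c: "Mat M * Mat N = Mat N * Mat M" by (rule cm_eqI) (simp add: assms)
  show ?thesis unfolding mat_exp_ent e exp_add_commuting[OF c] by simp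
qed

lemma mat_exp_minus: "mat_mult (mat_exp (\<lambda>x y. - M x y)) (mat_exp M) = mat_id"
proof -
  have e: "Mat (\<lambda>x y. - M x y) = - Mat M" by (rule cm_eqI) simp
  have "exp (- Mat M) * exp (- (- Mat M)) = 1" by (rule exp_minus_inverse)
  then have "ent (exp (- Mat M) * exp (Mat M)) = ent 1" by simp
  then show ?thesis unfolding mat_exp_ent e by simp
qed

definition ct :: "'v mat \<Rightarrow> 'v mat" where "ct M = (\<lambda>x y. cnj (M y x))"

lemma ct_mult: "ct (mat_mult A B) = mat_mult (ct B) (ct A)"
  by (simp add: ct_def mat_mult_def mult.commute)

lemma ct_id: "ct mat_id = mat_id"
  by (auto simp: ct_def mat_id_def intro!: ext)

lemma mat_pow_ct: "mat_pow (ct M) n = ct (mat_pow M n)"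
proof (induction n)
  case 0 then show ?case by (simp add: ct_id)
next
  case (Suc n)
  have "mat_pow (ct M) (Suc n) = mat_mult (ct (mat_pow M n)) (ct M)" by (simp add: Suc)
  also have "\<dots> = ct (mat_mult M (mat_pow M n))" by (simp add: ct_mult)
  also have "\<dots> = ct (mat_pow M (Suc n))" by (simp only: mat_pow_Suc')
  finally show ?case .
qed

lemma mat_exp_ct: "mat_exp (ct M) = ct (mat_exp M)"
proof (intro ext)
  fix x y
  have "(\<lambda>n. cnj (mat_pow M n y x / of_nat (fact n))) sums cnj (mat_exp M y x)"
    by (rule sums_cnj[THEN iffD2, OF mat_exp_sums])
  then have "(\<lambda>n. mat_pow (ct M) n x y / of_nat (fact n)) sums ct (mat_exp M) x y"
    unfolding mat_pow_ct by (simp add: ct_def)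
  then show "mat_exp (ct M) x y = ct (mat_exp M) x y"
    using mat_exp_sums sums_unique2 by metis
qed




definition kron :: "'a mat \<Rightarrow> 'b mat \<Rightarrow> ('a \<times> 'b) mat" where
  "kron A B = (\<lambda>p q. A (fst p) (fst q) * B (snd p) (snd q))"

lemma sum_UNIV_prod: "(\<Sum>z\<in>(UNIV::('a::finite \<times> 'b::finite) set). f z) = (\<Sum>x\<in>UNIV. \<Sum>y\<in>UNIV. f (x, y))"
  by (simp add: sum.cartesian_product)

lemma kron_mult: "mat_mult (kron A B) (kron C D) = kron (mat_mult A C) (mat_mult (B::'b::finite mat) D)"
  for A C :: "'a::finite mat"
proof (intro ext)
  fix p q :: "'a \<times> 'b"
  have "mat_mult (kron A B) (kron C D) p q = (\<Sum>x\<in>UNIV. \<Sum>y\<in>UNIV. (A (fst p) x * C x (fst q)) * (B (snd p) y * D y (snd q)))"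
    unfolding mat_mult_def kron_def sum_UNIV_prod by (simp add: mult_ac)
  also have "\<dots> = kron (mat_mult A C) (mat_mult B D) p q"
    unfolding kron_def mat_mult_def sum_product ..
  finally show "mat_mult (kron A B) (kron C D) p q = kron (mat_mult A C) (mat_mult B D) p q" .
qed

lemma kron_id: "kron mat_id mat_id = mat_id"
  by (auto intro!: ext simp: kron_def mat_id_def prod_eq_iff)

lemma mat_pow_kron1: "mat_pow (kron A mat_id) n = kron (mat_pow A n) (mat_id::'b::finite mat)"
  for A :: "'a::finite mat"
  by (induction n) (simp_all add: kron_id kron_mult)

lemma mat_pow_kron2: "mat_pow (kron mat_id B) n = kron (mat_id::'a::finite mat) (mat_pow B n)"
  for B :: "'b::finite mat"
  by (induction n) (simp_all add: kron_id kron_mult)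

lemma mat_exp_kron1: "mat_exp (kron A mat_id) = kron (mat_exp A) (mat_id::'b::finite mat)"
  for A :: "'a::finite mat"
proof (intro ext)
  fix p q :: "'a \<times> 'b"
  have "(\<lambda>n. mat_pow A n (fst p) (fst q) / of_nat (fact n) * mat_id (snd p) (snd q)) sums (mat_exp A (fst p) (fst q) * mat_id (snd p) (snd q))"
    by (rule sums_mult2[OF mat_exp_sums])
  then have "(\<lambda>n. mat_pow (kron A mat_id) n p q / of_nat (fact n)) sums kron (mat_exp A) (mat_id::'b mat) p q"
    unfolding mat_pow_kron1 by (simp add: kron_def)
  then show "mat_exp (kron A mat_id) p q = kron (mat_exp A) mat_id p q"
    using sums_unique2[OF mat_exp_sums[of "kron A mat_id" p q]] by blast
qed

lemma mat_exp_kron2: "mat_exp (kron mat_id B) = kron (mat_id::'a::finite mat) (mat_exp B)"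
  for B :: "'b::finite mat"
proof (intro ext)
  fix p q :: "'a \<times> 'b"
  have "(\<lambda>n. mat_id (fst p) (fst q) * (mat_pow B n (snd p) (snd q) / of_nat (fact n))) sums (mat_id (fst p) (fst q) * mat_exp B (snd p) (snd q))"
    by (rule sums_mult[OF mat_exp_sums])
  then have "(\<lambda>n. mat_pow (kron mat_id B) n p q / of_nat (fact n)) sums kron (mat_id::'a mat) (mat_exp B) p q"
    unfolding mat_pow_kron2 by (simp add: kron_def)
  then show "mat_exp (kron mat_id B) p q = kron mat_id (mat_exp B) p q"
    using sums_unique2[OF mat_exp_sums[of "kron mat_id B" p q]] by blast
qed

lemma mat_vec_kron: "mat_vec (kron A B) (\<lambda>z. u (fst z) * w (snd z)) = (\<lambda>z. mat_vec A u (fst z) * mat_vec B w (snd z))"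
  for A :: "'a::finite mat" and B :: "'b::finite mat"
  by (auto intro!: ext simp: mat_vec_def kron_def sum_UNIV_prod sum_product mult_ac)

lemma card_cart_nbrs:
  fixes G :: "'a::finite \<Rightarrow> 'a \<Rightarrow> bool" and H :: "'b::finite \<Rightarrow> 'b \<Rightarrow> bool"
  assumes "simple_graph G"
  shows "card {z. cart_prod G H (x, y) z} = card {u. G x u} + card {w. H y w}"
proof -
  have e: "{z. cart_prod G H (x, y) z} = (\<lambda>w. (x, w)) ` {w. H y w} \<union> (\<lambda>u. (u, y)) ` {u. G x u}"
    by (auto simp: cart_prod_def)
  have d: "(\<lambda>w. (x, w)) ` {w. H y w} \<inter> (\<lambda>u. (u, y)) ` {u. G x u} = {}"
    using assms by (auto simp: simple_graph_def)
  show ?thesis unfolding e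
    by (subst card_Un_disjoint) (auto simp: d card_image inj_on_def)
qed

lemma lap_cart:
  assumes "simple_graph G" "simple_graph H"
  shows "laplacian (cart_prod G H) p q = kron (laplacian G) mat_id p q + kron mat_id (laplacian H) p q"
proof -
  obtain x y x' y' where p: "p = (x, y)" and q: "q = (x', y')" by (cases p, cases q) auto
  have c: "card {z. cart_prod G H (x, y) z} = card {u. G x u} + card {w. H y w}"
    by (rule card_cart_nbrs[OF assms(1)])
  have nG: "\<not> G x x" and nH: "\<not> H y y" using assms by (auto simp: simple_graph_def)
  show ?thesis
  proof (cases "x = x'")
    case True
    then show ?thesis
    proof (cases "y = y'")
      case True
      have adj: "\<not> cart_prod G H (x, y) (x, y)" using nG nH by (simp add: cart_prod_def)
      show ?thesis using \<open>x = x'\<close> True c adj nG nH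
        by (simp add: p q laplacian_def kron_def mat_id_def)
    next
      case False
      then show ?thesis using \<open>x = x'\<close>
        by (simp add: p q laplacian_def kron_def mat_id_def cart_prod_def)
    qed
  next
    case False
    then show ?thesis
      by (simp add: p q laplacian_def kron_def mat_id_def cart_prod_def)
  qed
qed

lemma U_cart:
  assumes "simple_graph G" "simple_graph H"
  shows "U (cart_prod G H) t = kron (U G t) (U H t)"
proof -
  let ?MG = "\<lambda>x y. \<i> * complex_of_real t * laplacian G x y"
  let ?MH = "\<lambda>x y. \<i> * complex_of_real t * laplacian H x y"
  have e: "(\<lambda>p q. \<i> * complex_of_real t * laplacian (cart_prod G H) p q) = (\<lambda>p q. kron ?MG mat_id p q + kron mat_id ?MH p q)"
    by (auto intro!: ext simp: lap_cart[OF assms] kron_def algebra_simps)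
  have c: "mat_mult (kron ?MG mat_id) (kron mat_id ?MH) = mat_mult (kron mat_id ?MH) (kron ?MG mat_id)"
    by (simp add: kron_mult)
  have "U (cart_prod G H) t = mat_exp (\<lambda>p q. kron ?MG mat_id p q + kron mat_id ?MH p q)"
    unfolding U_def e ..
  also have "\<dots> = mat_mult (mat_exp (kron ?MG mat_id)) (mat_exp (kron mat_id ?MH))"
    by (rule mat_exp_add[OF c])
  also have "\<dots> = mat_mult (kron (U G t) mat_id) (kron mat_id (U H t))"
    unfolding mat_exp_kron1 mat_exp_kron2 U_def ..
  also have "\<dots> = kron (U G t) (U H t)"
    unfolding kron_mult mult_mat_id mat_id_mult ..
  finally show ?thesis .
qed

lemma U_unitary_entry:
  assumes "simple_graph E" and "mat_vec (U E t) (e_vec a) = (\<lambda>v. c * e_vec b v)"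
  shows "cmod c = 1"
proof -
  let ?M = "\<lambda>x y. \<i> * complex_of_real t * laplacian E x y"
  have ctM: "ct ?M = (\<lambda>x y. - ?M x y)"
    using assms(1) by (auto intro!: ext simp: ct_def laplacian_def simple_graph_def)
  have I: "mat_mult (ct (U E t)) (U E t) = mat_id"
    unfolding U_def mat_exp_ct[symmetric] ctM by (rule mat_exp_minus)
  have col: "U E t x a = c * e_vec b x" for x
  proof -
    have "mat_vec (U E t) (e_vec a) x = U E t x a" by (simp add: mat_vec_def e_vec_def if_distrib cong: if_cong)
    then show ?thesis using assms(2) by metis
  qed
  have "1 = mat_mult (ct (U E t)) (U E t) a a" using I by (simp add: mat_id_def)
  also have "\<dots> = (\<Sum>x\<in>UNIV. cnj (c * e_vec b x) * (c * e_vec b x))"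
    by (simp add: mat_mult_def ct_def col)
  also have "\<dots> = cnj c * c" by (simp add: e_vec_def if_distrib cong: if_cong)
  also have "\<dots> = complex_of_real ((cmod c)\<^sup>2)" by (metis complex_norm_square mult.commute)
  finally have "(cmod c)\<^sup>2 = 1" by (metis of_real_eq_1_iff)
  then show ?thesis using norm_ge_zero[of c] by (auto simp: power2_eq_1_iff)
qed




lemma sep:
  fixes u :: "'a \<Rightarrow> complex" and w q :: "'b \<Rightarrow> complex"
  assumes qg: "q \<gamma> = 1"
    and unit: "\<And>c. u = (\<lambda>v. c * e_vec b v) \<Longrightarrow> cmod c = 1"
  shows "(\<exists>g. cmod g = 1 \<and> (\<lambda>z. u (fst z) * w (snd z)) = (\<lambda>z. g * (e_vec b (fst z) * q (snd z))))
     \<longleftrightarrow> (\<exists>g1. cmod g1 = 1 \<and> u = (\<lambda>v. g1 * e_vec b v)) \<and> (\<exists>g2. cmod g2 = 1 \<and> w = (\<lambda>v. g2 * q v))"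
proof
  assume "\<exists>g. cmod g = 1 \<and> (\<lambda>z. u (fst z) * w (snd z)) = (\<lambda>z. g * (e_vec b (fst z) * q (snd z)))"
  then obtain g where g1: "cmod g = 1" and eq0: "(\<lambda>z. u (fst z) * w (snd z)) = (\<lambda>z. g * (e_vec b (fst z) * q (snd z)))"
    by blast
  have eq: "u x * w y = g * (e_vec b x * q y)" for x y
    using fun_cong[OF eq0, of "(x, y)"] by simp
  have "u b * w \<gamma> = g" using eq[of b \<gamma>] qg by (simp add: e_vec_def)
  moreover have "g \<noteq> 0" using g1 by auto
  ultimately have ub: "u b \<noteq> 0" and wg: "w \<gamma> \<noteq> 0" by auto
  have ux: "u x = u b * e_vec b x" for x
  proof (cases "x = b")
    case False
    then have "u x * w \<gamma> = 0" using eq[of x \<gamma>] by (simp add: e_vec_def)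
    then show ?thesis using wg False by (simp add: e_vec_def)
  qed (simp add: e_vec_def)
  then have uf: "u = (\<lambda>v. u b * e_vec b v)" by (rule ext)
  have nub: "cmod (u b) = 1" by (rule unit[OF uf])
  have wy: "w y = g / u b * q y" for y
  proof -
    have "u b * w y = g * q y" using eq[of b y] by (simp add: e_vec_def)
    then have "g / u b * q y = (u b * w y) / u b" by simp
    also have "\<dots> = w y" using ub by simp
    finally show ?thesis by simp
  qed
  have "cmod (g / u b) = 1" using g1 nub by (simp add: norm_divide)
  then show "(\<exists>g1. cmod g1 = 1 \<and> u = (\<lambda>v. g1 * e_vec b v)) \<and> (\<exists>g2. cmod g2 = 1 \<and> w = (\<lambda>v. g2 * q v))"
    using nub uf wy by blast
next
  assume "(\<exists>g1. cmod g1 = 1 \<and> u = (\<lambda>v. g1 * e_vec b v)) \<and> (\<exists>g2. cmod g2 = 1 \<and> w = (\<lambda>v. g2 * q v))"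
  then obtain g1 g2 where "cmod g1 = 1" "u = (\<lambda>v. g1 * e_vec b v)" "cmod g2 = 1" "w = (\<lambda>v. g2 * q v)"
    by blast
  then show "\<exists>g. cmod g = 1 \<and> (\<lambda>z. u (fst z) * w (snd z)) = (\<lambda>z. g * (e_vec b (fst z) * q (snd z)))"
    by (intro exI[of _ "g1 * g2"]) (auto simp: norm_mult mult_ac)
qed

lemma ps_prod: "pair_state (a, \<alpha>) (a, \<beta>) = (\<lambda>z. e_vec a (fst z) * pair_state \<alpha> \<beta> (snd z))"
  by (auto intro!: ext simp: pair_state_def e_vec_def)

theorem mainTheorem3:
  fixes G :: "'a::finite \<Rightarrow> 'a \<Rightarrow> bool" and H :: "'b::finite \<Rightarrow> 'b \<Rightarrow> bool"
    and a b :: 'a and \<alpha> \<beta> \<gamma> \<kappa> :: 'b and t :: real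
  assumes "simple_graph G" and "simple_graph H"
    and "\<alpha> \<noteq> \<beta>" and "\<gamma> \<noteq> \<kappa>"
  shows "pair_PST (cart_prod G H) t (a, \<alpha>) (a, \<beta>) (b, \<gamma>) (b, \<kappa>)
     \<longleftrightarrow> vertex_PST G t a b \<and> pair_PST H t \<alpha> \<beta> \<gamma> \<kappa>"
proof -
  have qg: "pair_state \<gamma> \<kappa> \<gamma> = 1" using assms(4) by (simp add: pair_state_def e_vec_def)
  have unit: "\<And>c. mat_vec (U G t) (e_vec a) = (\<lambda>v. c * e_vec b v) \<Longrightarrow> cmod c = 1"
    by (rule U_unitary_entry[OF assms(1)])
  have e: "mat_vec (U (cart_prod G H) t) (\<lambda>z. e_vec a (fst z) * pair_state \<alpha> \<beta> (snd z))
      = (\<lambda>z. mat_vec (U G t) (e_vec a) (fst z) * mat_vec (U H t) (pair_state \<alpha> \<beta>) (snd z))"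
    unfolding U_cart[OF assms(1,2)] mat_vec_kron ..
  show ?thesis
    unfolding pair_PST_def vertex_PST_def ps_prod e
    by (rule sep[where u = "mat_vec (U G t) (e_vec a)" and w = "mat_vec (U H t) (pair_state \<alpha> \<beta>)" and q = "pair_state \<gamma> \<kappa>" and \<gamma> = \<gamma> and b = b, OF qg unit])
qed


end
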